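(* Let $\Omega=\mathbb R^d$ or $\Omega=\mathbb T^d=\mathbb R^d/\mathbb Z^d$, $d\ge1$. Let $K\in L^1(\Omega)$ be nonnegative with $\int_\Omega K=1$, and let $f\in L^p(\Omega)$. If $p\in[2,\infty)$, then \[ \|K*f\|_{L^p(\Omega)}\le\|K*(|f|^{p/2})\|_{L^2(\Omega)}^{2/p}. \] If $p\in(1,2]$, then \[ \|K*f\|_{L^p(\Omega)}\le\|K*(|f|^{p/2})\|_{L^2(\Omega)}^{2(p-1)/p}\,\|f\|_{L^p(\Omega)}^{2-p}. \]
   Context: $(K*f)(x)=\int_\Omega K(x-y)f(y)\,dy$. *)

theory Defs
  imports "HOL-Analysis.Analysis"
begin

definition Lp_norm :: "'a measure \<Rightarrow> real \<Rightarrow> ('a \<Rightarrow> real) \<Rightarrow> real" where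
  "Lp_norm M p f = (\<integral>x. \<bar>f x\<bar> powr p \<partial>M) powr (1 / p)"

definition memLp :: "'a measure \<Rightarrow> real \<Rightarrow> ('a \<Rightarrow> real) \<Rightarrow> bool" where
  "memLp M p f \<longleftrightarrow> f \<in> borel_measurable M \<and> integrable M (\<lambda>x. \<bar>f x\<bar> powr p)"

definition conv :: "'a measure \<Rightarrow> ('a::ab_group_add \<Rightarrow> real) \<Rightarrow> ('a \<Rightarrow> real) \<Rightarrow> 'a \<Rightarrow> real" where
  "conv M K f x = (\<integral>y. K (x - y) * f y \<partial>M)"

text \<open>Functions on R^d that are Z^d-periodic, i.e. functions on the torus R^d/Z^d.\<close>
definition Zd_periodic :: "('a::euclidean_space \<Rightarrow> real) \<Rightarrow> bool" where
  "Zd_periodic g \<longleftrightarrow> (\<forall>x. \<forall>b\<in>Basis. g (x + b) = g x)"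

text \<open>Haar (Lebesgue) measure on the torus, realised on the fundamental domain [0,1]^d.\<close>
definition torus_measure :: "'a::euclidean_space measure" where
  "torus_measure = lebesgue_on (cbox 0 One)"

end

theory Submission
  imports Defs
begin


lemma young_pt:
  fixes a b A B \<theta> :: real
  assumes "0 \<le> a" "0 \<le> b" "0 < A" "0 < B" "0 < \<theta>" "\<theta> < 1"
  shows "a powr \<theta> * b powr (1 - \<theta>) \<le> A powr \<theta> * B powr (1 - \<theta>) * (\<theta> * (a / A) + (1 - \<theta>) * (b / B))"
proof (cases "a = 0 \<or> b = 0")
  case True
  then show ?thesis using assms by (auto intro!: mult_nonneg_nonneg add_nonneg_nonneg)
next
  case False
  then have ab: "0 < a" "0 < b" using assms by auto
  have "(a / A) powr \<theta> * (b / B) powr (1 - \<theta>) \<le> \<theta> * (a / A) + (1 - \<theta>) * (b / B)"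
    using Youngs_inequality_0[of \<theta> "1 - \<theta>" "a / A" "b / B"] assms ab by simp
  moreover have "(a / A) powr \<theta> * (b / B) powr (1 - \<theta>) = a powr \<theta> * b powr (1 - \<theta>) / (A powr \<theta> * B powr (1 - \<theta>))"
    using assms ab by (simp add: powr_divide)
  moreover have "0 < A powr \<theta> * B powr (1 - \<theta>)" using assms by simp
  ultimately show ?thesis by (simp add: divide_le_eq mult.commute)
qed




lemma holder_w:
  fixes w a b :: "'b \<Rightarrow> real" and N :: "'b measure"
  assumes [measurable]: "w \<in> borel_measurable N" "a \<in> borel_measurable N" "b \<in> borel_measurable N"
    and nn: "\<And>y. y \<in> space N \<Longrightarrow> 0 \<le> w y \<and> 0 \<le> a y \<and> 0 \<le> b y"
    and ia: "integrable N (\<lambda>y. w y * a y)" and ib: "integrable N (\<lambda>y. w y * b y)"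
    and th: "0 < \<theta>" "\<theta> < 1"
  shows "integrable N (\<lambda>y. w y * (a y powr \<theta> * b y powr (1 - \<theta>)))"
    and "(\<integral>y. w y * (a y powr \<theta> * b y powr (1 - \<theta>)) \<partial>N)
          \<le> (\<integral>y. w y * a y \<partial>N) powr \<theta> * (\<integral>y. w y * b y \<partial>N) powr (1 - \<theta>)"
proof -
  have pt: "a y powr \<theta> * b y powr (1 - \<theta>) \<le> \<theta> * a y + (1 - \<theta>) * b y" if "y \<in> space N" for y
  proof (cases "a y = 0 \<or> b y = 0")
    case True then show ?thesis using nn[OF that] th by auto
  next
    case False then show ?thesis using nn[OF that] th Youngs_inequality_0[of \<theta> "1 - \<theta>" "a y" "b y"] by auto
  qed
  have ibd: "integrable N (\<lambda>y. \<theta> * (w y * a y) + (1 - \<theta>) * (w y * b y))"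
    using ia ib by auto
  show int: "integrable N (\<lambda>y. w y * (a y powr \<theta> * b y powr (1 - \<theta>)))"
  proof (rule Bochner_Integration.integrable_bound[OF ibd])
    show "AE y in N. norm (w y * (a y powr \<theta> * b y powr (1 - \<theta>))) \<le> norm (\<theta> * (w y * a y) + (1 - \<theta>) * (w y * b y))"
    proof (rule AE_I2)
      fix y assume y: "y \<in> space N"
      have "w y * (a y powr \<theta> * b y powr (1 - \<theta>)) \<le> w y * (\<theta> * a y + (1 - \<theta>) * b y)"
        using pt[OF y] nn[OF y] by (intro mult_left_mono) auto
      then show "norm (w y * (a y powr \<theta> * b y powr (1 - \<theta>))) \<le> norm (\<theta> * (w y * a y) + (1 - \<theta>) * (w y * b y))"
        using nn[OF y] th by (simp add: algebra_simps abs_of_nonneg)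
    qed
  qed simp
  define A where "A = (\<integral>y. w y * a y \<partial>N)"
  define B where "B = (\<integral>y. w y * b y \<partial>N)"
  have A0: "0 \<le> A" unfolding A_def by (rule Bochner_Integration.integral_nonneg) (use nn in auto)
  have B0: "0 \<le> B" unfolding B_def by (rule Bochner_Integration.integral_nonneg) (use nn in auto)
  show "(\<integral>y. w y * (a y powr \<theta> * b y powr (1 - \<theta>)) \<partial>N) \<le> A powr \<theta> * B powr (1 - \<theta>)"
  proof (cases "A = 0 \<or> B = 0")
    case True
    then have "AE y in N. w y * a y = 0 \<or> w y * b y = 0"
    proof
      assume "A = 0"
      then have "AE y in N. w y * a y = 0"
        using integral_nonneg_eq_0_iff_AE[OF ia] nn unfolding A_def by auto
      then show ?thesis by auto
    next
      assume "B = 0"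
      then have "AE y in N. w y * b y = 0"
        using integral_nonneg_eq_0_iff_AE[OF ib] nn unfolding B_def by auto
      then show ?thesis by auto
    qed
    then have "AE y in N. w y * (a y powr \<theta> * b y powr (1 - \<theta>)) = 0"
      by eventually_elim auto
    then have "(\<integral>y. w y * (a y powr \<theta> * b y powr (1 - \<theta>)) \<partial>N) = (\<integral>y. 0 \<partial>N)"
      by (intro integral_cong_AE) measurable
    then show ?thesis by simp
  next
    case False
    then have AB: "0 < A" "0 < B" using A0 B0 by auto
    have "(\<integral>y. w y * (a y powr \<theta> * b y powr (1 - \<theta>)) \<partial>N)
       \<le> (\<integral>y. A powr \<theta> * B powr (1 - \<theta>) * (\<theta> / A * (w y * a y) + (1 - \<theta>) / B * (w y * b y)) \<partial>N)"
    proof (rule integral_mono[OF int])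
      show "integrable N (\<lambda>y. A powr \<theta> * B powr (1 - \<theta>) * (\<theta> / A * (w y * a y) + (1 - \<theta>) / B * (w y * b y)))"
        using ia ib by auto
      fix y assume y: "y \<in> space N"
      have "w y * (a y powr \<theta> * b y powr (1 - \<theta>)) \<le> w y * (A powr \<theta> * B powr (1 - \<theta>) * (\<theta> * (a y / A) + (1 - \<theta>) * (b y / B)))"
        using young_pt[of "a y" "b y" A B \<theta>] nn[OF y] AB th by (intro mult_left_mono) auto
      then show "w y * (a y powr \<theta> * b y powr (1 - \<theta>)) \<le> A powr \<theta> * B powr (1 - \<theta>) * (\<theta> / A * (w y * a y) + (1 - \<theta>) / B * (w y * b y))"
        by (simp add: algebra_simps)
    qed
    also have "\<dots> = A powr \<theta> * B powr (1 - \<theta>) * (\<theta> / A * A + (1 - \<theta>) / B * B)"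
      using ia ib unfolding A_def B_def by simp
    also have "\<dots> = A powr \<theta> * B powr (1 - \<theta>)" using AB by simp
    finally show ?thesis .
  qed
qed




lemma num_a:
  fixes I J p :: real
  assumes "0 \<le> I" "0 \<le> J" "1 < p" "I \<le> J"
  shows "I powr (1 / p) \<le> (J powr (1 / 2)) powr (2 / p)"
proof -
  have "(J powr (1 / 2)) powr (2 / p) = J powr (1 / p)" using assms by (simp add: powr_powr)
  moreover have "I powr (1 / p) \<le> J powr (1 / p)" using assms by (intro powr_mono2) auto
  ultimately show ?thesis by simp
qed

lemma num_b:
  fixes I J L p :: real
  assumes "0 \<le> I" "0 \<le> J" "0 \<le> L" "1 < p" "p < 2" "I \<le> J powr (p - 1) * L powr (2 - p)"
  shows "I powr (1 / p) \<le> (J powr (1 / 2)) powr (2 * (p - 1) / p) * (L powr (1 / p)) powr (2 - p)"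
proof -
  have "(J powr (1 / 2)) powr (2 * (p - 1) / p) * (L powr (1 / p)) powr (2 - p)
      = (J powr (p - 1) * L powr (2 - p)) powr (1 / p)"
  proof -
    have e: "(2 * p - 2) / (2 * p) = (p - 1) / p" using assms by (simp add: field_simps)
    show ?thesis using assms by (simp add: powr_powr powr_mult e)
  qed
  moreover have "I powr (1 / p) \<le> (J powr (p - 1) * L powr (2 - p)) powr (1 / p)"
    using assms by (intro powr_mono2) auto
  ultimately show ?thesis by simp
qed

lemma num_c:
  fixes I J L :: real
  assumes "0 \<le> I" "0 \<le> J" "0 \<le> L" "I \<le> J" "J \<le> L"
  shows "I powr (1 / 2) \<le> (J powr (1 / 2)) powr (2 * (2 - 1) / 2) * (L powr (1 / 2)) powr (2 - 2)"
proof (cases "L = 0")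
  case True
  then have "I = 0" using assms by auto
  then show ?thesis by simp
next
  case False
  then have "L powr (1/2) \<noteq> 0" using assms by simp
  then show ?thesis using assms by (simp add: powr_mono2)
qed




definition kop :: "'a measure \<Rightarrow> ('a \<Rightarrow> 'a \<Rightarrow> real) \<Rightarrow> ('a \<Rightarrow> real) \<Rightarrow> 'a \<Rightarrow> real" where
  "kop M k \<phi> x = (\<integral>y. k x y * \<phi> y \<partial>M)"

lemma holder_w':
  fixes w a b h :: "'b \<Rightarrow> real" and N :: "'b measure"
  assumes "w \<in> borel_measurable N" "a \<in> borel_measurable N" "b \<in> borel_measurable N"
    and "\<And>y. y \<in> space N \<Longrightarrow> 0 \<le> w y \<and> 0 \<le> a y \<and> 0 \<le> b y"
    and "integrable N (\<lambda>y. w y * a y)" and "integrable N (\<lambda>y. w y * b y)"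
    and "0 < \<theta>" "\<theta> < 1"
    and h: "\<And>y. y \<in> space N \<Longrightarrow> h y = w y * (a y powr \<theta> * b y powr (1 - \<theta>))"
  shows "integrable N h"
    and "(\<integral>y. h y \<partial>N) \<le> (\<integral>y. w y * a y \<partial>N) powr \<theta> * (\<integral>y. w y * b y \<partial>N) powr (1 - \<theta>)"
proof -
  show "integrable N h"
  proof -
    have i: "integrable N (\<lambda>y. w y * (a y powr \<theta> * b y powr (1 - \<theta>)))"
      apply (rule holder_w(1)) using assms by auto
    show ?thesis by (rule Bochner_Integration.integrable_cong[OF refl h, THEN iffD2, OF _ i])
  qed
  have "(\<integral>y. h y \<partial>N) = (\<integral>y. w y * (a y powr \<theta> * b y powr (1 - \<theta>)) \<partial>N)"
    by (rule Bochner_Integration.integral_cong) (simp_all add: h)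
  moreover have "(\<integral>y. w y * (a y powr \<theta> * b y powr (1 - \<theta>)) \<partial>N) \<le> (\<integral>y. w y * a y \<partial>N) powr \<theta> * (\<integral>y. w y * b y \<partial>N) powr (1 - \<theta>)"
    apply (rule holder_w(2)) using assms by auto
  ultimately show "(\<integral>y. h y \<partial>N) \<le> (\<integral>y. w y * a y \<partial>N) powr \<theta> * (\<integral>y. w y * b y \<partial>N) powr (1 - \<theta>)"
    by simp
qed

context
  fixes M :: "'a measure" and k :: "'a \<Rightarrow> 'a \<Rightarrow> real" and F :: "'a \<Rightarrow> real" and p :: real
  assumes sf: "sigma_finite_measure M"
    and kmeas[measurable]: "(\<lambda>(x,y). k x y) \<in> borel_measurable (M \<Otimes>\<^sub>M M)"
    and knn: "\<And>x y. 0 \<le> k x y"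
    and Fmeas[measurable]: "F \<in> borel_measurable M"
    and Fint: "integrable M (\<lambda>x. \<bar>F x\<bar> powr p)"
    and m1: "\<And>x. x \<in> space M \<Longrightarrow> (\<integral>\<^sup>+y. k x y \<partial>M) \<le> 1"
    and m2: "\<And>y. y \<in> space M \<Longrightarrow> (\<integral>\<^sup>+x. k x y \<partial>M) \<le> 1"
    and p1: "1 < p"
begin

interpretation sigma_finite_measure M by (rule sf)
interpretation pair_sigma_finite M M ..

lemma kx_meas: "x \<in> space M \<Longrightarrow> k x \<in> borel_measurable M"
  using measurable_Pair2[OF kmeas] by simp

lemma ky_meas: "y \<in> space M \<Longrightarrow> (\<lambda>x. k x y) \<in> borel_measurable M"
  using measurable_Pair1[OF kmeas] by simp

lemma kop_meas:
  assumes [measurable]: "\<phi> \<in> borel_measurable M"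
  shows "kop M k \<phi> \<in> borel_measurable M"
  unfolding kop_def by measurable

lemma tonelli_le:
  assumes [measurable]: "\<phi> \<in> borel_measurable M" and nn: "\<And>y. 0 \<le> \<phi> y"
  shows "(\<integral>\<^sup>+x. \<integral>\<^sup>+y. ennreal (k x y * \<phi> y) \<partial>M \<partial>M) \<le> (\<integral>\<^sup>+y. ennreal (\<phi> y) \<partial>M)"
proof -
  have "(\<integral>\<^sup>+x. \<integral>\<^sup>+y. ennreal (k x y * \<phi> y) \<partial>M \<partial>M) = (\<integral>\<^sup>+y. \<integral>\<^sup>+x. ennreal (k x y * \<phi> y) \<partial>M \<partial>M)"
    by (rule Fubini'[symmetric]) measurable
  also have "\<dots> = (\<integral>\<^sup>+y. (\<integral>\<^sup>+x. ennreal (k x y) \<partial>M) * ennreal (\<phi> y) \<partial>M)"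
    by (intro nn_integral_cong) (simp add: ennreal_mult nn knn nn_integral_multc)
  also have "\<dots> \<le> (\<integral>\<^sup>+y. ennreal (\<phi> y) \<partial>M)"
  proof (intro nn_integral_mono)
    fix y assume "y \<in> space M"
    then have "(\<integral>\<^sup>+x. ennreal (k x y) \<partial>M) * ennreal (\<phi> y) \<le> 1 * ennreal (\<phi> y)"
      using m2 by (intro mult_right_mono) auto
    then show "(\<integral>\<^sup>+x. ennreal (k x y) \<partial>M) * ennreal (\<phi> y) \<le> ennreal (\<phi> y)" by simp
  qed
  finally show ?thesis .
qed

lemma k_int:
  assumes x: "x \<in> space M"
  shows "integrable M (k x)" "(\<integral>y. k x y \<partial>M) \<le> 1" "0 \<le> (\<integral>y. k x y \<partial>M)"
proof -
  show i: "integrable M (k x)"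
    using m1[OF x] x by (intro integrableI_nonneg) (auto simp: knn top.not_eq_extremum intro: le_less_trans)
  have "ennreal (\<integral>y. k x y \<partial>M) = (\<integral>\<^sup>+y. k x y \<partial>M)"
    by (rule nn_integral_eq_integral[OF i, symmetric]) (simp add: knn)
  then show "(\<integral>y. k x y \<partial>M) \<le> 1" using m1[OF x]
    by (metis ennreal_le_1)
  show "0 \<le> (\<integral>y. k x y \<partial>M)" by (simp add: knn)
qed

lemma B_fin:
  "AE x in M. (\<integral>\<^sup>+y. ennreal (k x y * \<bar>F y\<bar> powr p) \<partial>M) \<noteq> \<infinity>"
proof (rule nn_integral_PInf_AE)
  show "(\<lambda>x. \<integral>\<^sup>+y. ennreal (k x y * \<bar>F y\<bar> powr p) \<partial>M) \<in> borel_measurable M"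
    by measurable
  have "(\<integral>\<^sup>+x. \<integral>\<^sup>+y. ennreal (k x y * \<bar>F y\<bar> powr p) \<partial>M \<partial>M) \<le> (\<integral>\<^sup>+y. ennreal (\<bar>F y\<bar> powr p) \<partial>M)"
    by (rule tonelli_le) auto
  also have "\<dots> < \<infinity>" using Fint by (simp add: nn_integral_eq_integral)
  finally show "(\<integral>\<^sup>+x. \<integral>\<^sup>+y. ennreal (k x y * \<bar>F y\<bar> powr p) \<partial>M \<partial>M) \<noteq> \<infinity>" by simp
qed

lemma kG_int:
  assumes x: "x \<in> space M" and B: "(\<integral>\<^sup>+y. ennreal (k x y * \<bar>F y\<bar> powr p) \<partial>M) \<noteq> \<infinity>"
  shows "integrable M (\<lambda>y. k x y * \<bar>F y\<bar> powr p)"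
  using B x by (intro integrableI_nonneg) (auto simp: knn top.not_eq_extremum)

lemma TG_int:
  "integrable M (kop M k (\<lambda>y. \<bar>F y\<bar> powr p))"
  "(\<integral>x. kop M k (\<lambda>y. \<bar>F y\<bar> powr p) x \<partial>M) \<le> (\<integral>x. \<bar>F x\<bar> powr p \<partial>M)"
proof -
  let ?B = "\<lambda>x. \<integral>\<^sup>+y. ennreal (k x y * \<bar>F y\<bar> powr p) \<partial>M"
  let ?T = "kop M k (\<lambda>y. \<bar>F y\<bar> powr p)"
  have T0: "0 \<le> ?T x" for x unfolding kop_def by (simp add: knn)
  have pt: "ennreal (?T x) \<le> ?B x" for x
  proof (cases "integrable M (\<lambda>y. k x y * \<bar>F y\<bar> powr p)")
    case True
    then show ?thesis unfolding kop_def by (subst nn_integral_eq_integral) (auto simp: knn)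
  next
    case False
    then show ?thesis unfolding kop_def by (simp add: not_integrable_integral_eq)
  qed
  have "(\<integral>\<^sup>+x. ennreal (?T x) \<partial>M) \<le> (\<integral>\<^sup>+x. ?B x \<partial>M)"
    by (intro nn_integral_mono pt)
  also have "\<dots> \<le> (\<integral>\<^sup>+y. ennreal (\<bar>F y\<bar> powr p) \<partial>M)"
    by (rule tonelli_le) auto
  also have "\<dots> = ennreal (\<integral>y. \<bar>F y\<bar> powr p \<partial>M)" using Fint by (simp add: nn_integral_eq_integral)
  finally have le: "(\<integral>\<^sup>+x. ennreal (?T x) \<partial>M) \<le> ennreal (\<integral>y. \<bar>F y\<bar> powr p \<partial>M)" .
  show i: "integrable M ?T"
    using le by (intro integrableI_nonneg) (auto simp: T0 kop_meas top.not_eq_extremum intro: le_less_trans)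
  have "ennreal (\<integral>x. ?T x \<partial>M) = (\<integral>\<^sup>+x. ennreal (?T x) \<partial>M)"
    by (rule nn_integral_eq_integral[OF i, symmetric]) (simp add: T0)
  with le show "(\<integral>x. ?T x \<partial>M) \<le> (\<integral>x. \<bar>F x\<bar> powr p \<partial>M)"
    by (metis Bochner_Integration.integral_nonneg abs_ge_zero ennreal_le_iff powr_ge_zero)
qed

lemma pointwise:
  assumes x: "x \<in> space M" and B: "(\<integral>\<^sup>+y. ennreal (k x y * \<bar>F y\<bar> powr p) \<partial>M) \<noteq> \<infinity>"
  shows "\<bar>kop M k (\<lambda>y. \<bar>F y\<bar> powr (p / 2)) x\<bar> powr 2 \<le> kop M k (\<lambda>y. \<bar>F y\<bar> powr p) x"
    and "2 \<le> p \<Longrightarrow> \<bar>kop M k F x\<bar> powr p \<le> \<bar>kop M k (\<lambda>y. \<bar>F y\<bar> powr (p / 2)) x\<bar> powr 2"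
    and "p < 2 \<Longrightarrow> \<bar>kop M k F x\<bar> powr p \<le>
          (\<bar>kop M k (\<lambda>y. \<bar>F y\<bar> powr (p / 2)) x\<bar> powr 2) powr (p - 1)
            * (kop M k (\<lambda>y. \<bar>F y\<bar> powr p) x) powr (1 - (p - 1))"
proof -
  define g where "g = (\<lambda>y. \<bar>F y\<bar> powr (p / 2))"
  define G where "G = (\<lambda>y. \<bar>F y\<bar> powr p)"
  define Tg where "Tg = kop M k g x"
  define TG where "TG = kop M k G x"
  define m where "m = (\<integral>y. k x y \<partial>M)"
  have [measurable]: "g \<in> borel_measurable M" "G \<in> borel_measurable M" unfolding g_def G_def by measurable
  have kxm[measurable]: "k x \<in> borel_measurable M" using kx_meas[OF x] .
  have iG: "integrable M (\<lambda>y. k x y * G y)" unfolding G_def by (rule kG_int[OF x B])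
  have ik: "integrable M (\<lambda>y. k x y * 1)" using k_int(1)[OF x] by simp
  have m1: "m \<le> 1" "0 \<le> m" unfolding m_def using k_int[OF x] by auto
  have im: "(\<integral>y. k x y * 1 \<partial>M) = m" unfolding m_def by simp
  have nnx: "\<And>y. y \<in> space M \<Longrightarrow> 0 \<le> k x y \<and> 0 \<le> G y \<and> 0 \<le> (1::real)"
    "\<And>y. y \<in> space M \<Longrightarrow> 0 \<le> k x y \<and> 0 \<le> g y \<and> 0 \<le> (1::real)"
    "\<And>y. y \<in> space M \<Longrightarrow> 0 \<le> k x y \<and> 0 \<le> g y \<and> 0 \<le> G y"
    by (auto simp: knn g_def G_def)
  have TG0: "0 \<le> TG" unfolding TG_def kop_def G_def by (simp add: knn)
  have Tg0: "0 \<le> Tg" unfolding Tg_def kop_def g_def by (simp add: knn)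
  have e1: "k x y * g y = k x y * (G y powr (1 / 2) * 1 powr (1 - 1 / 2))" for y
    unfolding g_def G_def by (simp add: powr_powr)
  have ig: "integrable M (\<lambda>y. k x y * g y)"
    by (rule holder_w'(1)[OF _ _ _ nnx(1) iG ik _ _ e1]) auto
  have "Tg \<le> TG powr (1 / 2) * m powr (1 - 1 / 2)"
    unfolding Tg_def TG_def kop_def im[symmetric]
    by (rule holder_w'(2)[OF _ _ _ nnx(1) iG ik _ _ e1]) auto
  also have "\<dots> \<le> TG powr (1 / 2)"
    using m1 TG0 by (simp add: mult_left_le powr_le1)
  finally have Tg_le: "Tg \<le> TG powr (1 / 2)" .
  show P1: "\<bar>kop M k g x\<bar> powr 2 \<le> kop M k G x"
  proof -
    have "\<bar>Tg\<bar> powr 2 \<le> (TG powr (1 / 2)) powr 2"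
      using Tg_le Tg0 by (intro powr_mono2) auto
    also have "\<dots> = TG" using TG0 by (simp add: powr_powr)
    finally show ?thesis unfolding Tg_def TG_def .
  qed
  have e2: "k x y * \<bar>F y\<bar> = k x y * (G y powr (1 / p) * 1 powr (1 - 1 / p))" for y
    unfolding G_def using p1 by (simp add: powr_powr)
  have iF: "integrable M (\<lambda>y. k x y * \<bar>F y\<bar>)"
    by (rule holder_w'(1)[OF _ _ _ nnx(1) iG ik _ _ e2]) (use p1 in auto)
  have absF: "\<bar>kop M k F x\<bar> \<le> (\<integral>y. k x y * \<bar>F y\<bar> \<partial>M)"
  proof -
    have "norm (kop M k F x) \<le> (\<integral>y. norm (k x y * F y) \<partial>M)" unfolding kop_def by (rule integral_norm_bound)
    also have "\<dots> = (\<integral>y. k x y * \<bar>F y\<bar> \<partial>M)" by (simp add: abs_mult knn)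
    finally show ?thesis by simp
  qed
  have C0: "0 \<le> (\<integral>y. k x y * \<bar>F y\<bar> \<partial>M)" by (simp add: knn)
  show "2 \<le> p \<Longrightarrow> \<bar>kop M k F x\<bar> powr p \<le> \<bar>kop M k g x\<bar> powr 2"
  proof -
    assume p2: "2 \<le> p"
    have C_le: "(\<integral>y. k x y * \<bar>F y\<bar> \<partial>M) \<le> Tg powr (2 / p)"
    proof (cases "p = 2")
      case True
      have "(\<integral>y. k x y * \<bar>F y\<bar> \<partial>M) = Tg" unfolding Tg_def kop_def g_def True by simp
      then show ?thesis using Tg0 True by simp
    next
      case False
      then have p2': "2 < p" using p2 by simp
      have e3: "k x y * \<bar>F y\<bar> = k x y * (g y powr (2 / p) * 1 powr (1 - 2 / p))" for y
        unfolding g_def using p1 by (simp add: powr_powr)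
      have "(\<integral>y. k x y * \<bar>F y\<bar> \<partial>M) \<le> Tg powr (2 / p) * m powr (1 - 2 / p)"
        unfolding Tg_def kop_def im[symmetric]
        by (rule holder_w'(2)[OF _ _ _ nnx(2) ig ik _ _ e3]) (use p2' in auto)
      also have "\<dots> \<le> Tg powr (2 / p)"
        using m1 Tg0 p2' by (simp add: mult_left_le powr_le1)
      finally show ?thesis .
    qed
    have "\<bar>kop M k F x\<bar> powr p \<le> (Tg powr (2 / p)) powr p"
      using absF C_le C0 p1 by (intro powr_mono2) auto
    also have "\<dots> = \<bar>Tg\<bar> powr 2" using Tg0 p1 by (simp add: powr_powr)
    finally show ?thesis unfolding Tg_def .
  qed
  show "p < 2 \<Longrightarrow> \<bar>kop M k F x\<bar> powr p \<le> (\<bar>kop M k g x\<bar> powr 2) powr (p - 1) * (kop M k G x) powr (1 - (p - 1))"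
  proof -
    assume p2: "p < 2"
    define \<theta> where "\<theta> = 2 * (p - 1) / p"
    have th: "0 < \<theta>" "\<theta> < 1" unfolding \<theta>_def using p1 p2 by (auto simp: field_simps)
    have ex: "p / 2 * \<theta> + p * (1 - \<theta>) = 1" unfolding \<theta>_def using p1 by (simp add: field_simps)
    have e4: "k x y * \<bar>F y\<bar> = k x y * (g y powr \<theta> * G y powr (1 - \<theta>))" for y
    proof -
      have "g y powr \<theta> * G y powr (1 - \<theta>) = \<bar>F y\<bar> powr (p / 2 * \<theta> + p * (1 - \<theta>))"
        unfolding g_def G_def by (simp add: powr_powr powr_add)
      then show ?thesis using ex by simp
    qed
    have "(\<integral>y. k x y * \<bar>F y\<bar> \<partial>M) \<le> Tg powr \<theta> * TG powr (1 - \<theta>)"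
      unfolding Tg_def TG_def kop_def
      by (rule holder_w'(2)[OF _ _ _ nnx(3) ig iG th e4]) auto
    then have "\<bar>kop M k F x\<bar> powr p \<le> (Tg powr \<theta> * TG powr (1 - \<theta>)) powr p"
      using absF C0 p1 by (intro powr_mono2) auto
    also have "\<dots> = Tg powr (\<theta> * p) * TG powr ((1 - \<theta>) * p)"
      by (simp add: powr_mult powr_powr)
    also have "\<dots> = (\<bar>Tg\<bar> powr 2) powr (p - 1) * TG powr (1 - (p - 1))"
    proof -
      have "\<theta> * p = 2 * (p - 1)" "(1 - \<theta>) * p = 1 - (p - 1)" unfolding \<theta>_def using p1 by (auto simp: field_simps)
      moreover have "(\<bar>Tg\<bar> powr 2) powr (p - 1) = Tg powr (2 * (p - 1))"
        using Tg0 by (simp only: powr_powr abs_of_nonneg)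
      ultimately show ?thesis by simp
    qed
    finally show ?thesis unfolding Tg_def TG_def .
  qed
qed

theorem core_main:
  "(2 \<le> p \<longrightarrow>
      Lp_norm M p (kop M k F) \<le> Lp_norm M 2 (kop M k (\<lambda>y. \<bar>F y\<bar> powr (p / 2))) powr (2 / p))
   \<and> (p \<le> 2 \<longrightarrow>
      Lp_norm M p (kop M k F) \<le> Lp_norm M 2 (kop M k (\<lambda>y. \<bar>F y\<bar> powr (p / 2))) powr (2 * (p - 1) / p)
         * Lp_norm M p F powr (2 - p))"
proof -
  define TF where "TF = kop M k F"
  define Tg where "Tg = kop M k (\<lambda>y. \<bar>F y\<bar> powr (p / 2))"
  define TG where "TG = kop M k (\<lambda>y. \<bar>F y\<bar> powr p)"
  have [measurable]: "TF \<in> borel_measurable M" "Tg \<in> borel_measurable M" "TG \<in> borel_measurable M"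
    unfolding TF_def Tg_def TG_def by (auto intro!: kop_meas)
  have TG0: "0 \<le> TG x" for x unfolding TG_def kop_def by (simp add: knn)
  have ae: "AE x in M. \<bar>Tg x\<bar> powr 2 \<le> TG x \<and> (2 \<le> p \<longrightarrow> \<bar>TF x\<bar> powr p \<le> \<bar>Tg x\<bar> powr 2)
      \<and> (p < 2 \<longrightarrow> \<bar>TF x\<bar> powr p \<le> (\<bar>Tg x\<bar> powr 2) powr (p - 1) * (TG x) powr (1 - (p - 1)))"
    using B_fin
  proof (rule AE_mp[OF _ AE_I2[rule_format]], intro impI)
    fix x assume x: "x \<in> space M" and B: "(\<integral>\<^sup>+y. ennreal (k x y * \<bar>F y\<bar> powr p) \<partial>M) \<noteq> \<infinity>"
    show "\<bar>Tg x\<bar> powr 2 \<le> TG x \<and> (2 \<le> p \<longrightarrow> \<bar>TF x\<bar> powr p \<le> \<bar>Tg x\<bar> powr 2)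
      \<and> (p < 2 \<longrightarrow> \<bar>TF x\<bar> powr p \<le> (\<bar>Tg x\<bar> powr 2) powr (p - 1) * (TG x) powr (1 - (p - 1)))"
      unfolding TF_def Tg_def TG_def using pointwise[OF x B] by auto
  qed
  have iTG: "integrable M TG" unfolding TG_def by (rule TG_int(1))
  have TGL: "(\<integral>x. TG x \<partial>M) \<le> (\<integral>x. \<bar>F x\<bar> powr p \<partial>M)" unfolding TG_def by (rule TG_int(2))
  have iJ: "integrable M (\<lambda>x. \<bar>Tg x\<bar> powr 2)"
    by (rule Bochner_Integration.integrable_bound[OF iTG]) (use ae TG0 in \<open>auto elim!: eventually_mono\<close>)
  define I where "I = (\<integral>x. \<bar>TF x\<bar> powr p \<partial>M)"
  define J where "J = (\<integral>x. \<bar>Tg x\<bar> powr 2 \<partial>M)"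
  define L where "L = (\<integral>x. \<bar>F x\<bar> powr p \<partial>M)"
  have I0: "0 \<le> I" "0 \<le> J" "0 \<le> L" unfolding I_def J_def L_def by auto
  have JL: "J \<le> L"
  proof -
    have "J \<le> (\<integral>x. TG x \<partial>M)" unfolding J_def
      by (rule integral_mono_AE[OF iJ iTG]) (use ae in \<open>auto elim!: eventually_mono\<close>)
    then show ?thesis using TGL unfolding L_def by simp
  qed
  have norms: "Lp_norm M p (kop M k F) = I powr (1 / p)"
     "Lp_norm M 2 (kop M k (\<lambda>y. \<bar>F y\<bar> powr (p / 2))) = J powr (1 / 2)"
     "Lp_norm M p F = L powr (1 / p)"
    unfolding Lp_norm_def I_def J_def L_def TF_def Tg_def by simp_all
  have IJ: "I \<le> J" if p2: "2 \<le> p"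
  proof -
    have ae2: "AE x in M. \<bar>TF x\<bar> powr p \<le> \<bar>Tg x\<bar> powr 2" using ae p2 by (auto elim!: eventually_mono)
    have iI: "integrable M (\<lambda>x. \<bar>TF x\<bar> powr p)"
      by (rule Bochner_Integration.integrable_bound[OF iJ]) (use ae2 in \<open>auto elim!: eventually_mono\<close>)
    show ?thesis unfolding I_def J_def by (rule integral_mono_AE[OF iI iJ ae2])
  qed
  have case1: "2 \<le> p \<longrightarrow> I powr (1 / p) \<le> (J powr (1 / 2)) powr (2 / p)"
    using num_a[OF I0(1,2) p1] IJ by auto
  have case2: "p \<le> 2 \<longrightarrow> I powr (1 / p) \<le> (J powr (1 / 2)) powr (2 * (p - 1) / p) * (L powr (1 / p)) powr (2 - p)"
  proof (intro impI)
    assume p2: "p \<le> 2"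
    show "I powr (1 / p) \<le> (J powr (1 / 2)) powr (2 * (p - 1) / p) * (L powr (1 / p)) powr (2 - p)"
    proof (cases "p = 2")
      case True
      then show ?thesis using num_c[OF I0 IJ JL] by simp
    next
      case False
      then have p2': "p < 2" using p2 by simp
      have ae2: "AE x in M. \<bar>TF x\<bar> powr p \<le> 1 * ((\<bar>Tg x\<bar> powr 2) powr (p - 1) * (TG x) powr (1 - (p - 1)))"
        using ae p2' by (auto elim!: eventually_mono)
      have th: "0 < p - 1" "p - 1 < 1" using p1 p2' by auto
      have nn: "\<And>y. y \<in> space M \<Longrightarrow> 0 \<le> (1::real) \<and> 0 \<le> \<bar>Tg y\<bar> powr 2 \<and> 0 \<le> TG y"
        using TG0 by auto
      have i1: "integrable M (\<lambda>y. 1 * (\<bar>Tg y\<bar> powr 2))" using iJ by simp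
      have i2: "integrable M (\<lambda>y. 1 * TG y)" using iTG by simp
      have ih: "integrable M (\<lambda>x. 1 * ((\<bar>Tg x\<bar> powr 2) powr (p - 1) * (TG x) powr (1 - (p - 1))))"
        by (rule holder_w(1)[OF _ _ _ nn i1 i2 th]) auto
      have hle: "(\<integral>x. 1 * ((\<bar>Tg x\<bar> powr 2) powr (p - 1) * (TG x) powr (1 - (p - 1))) \<partial>M)
          \<le> (\<integral>y. 1 * (\<bar>Tg y\<bar> powr 2) \<partial>M) powr (p - 1) * (\<integral>y. 1 * TG y \<partial>M) powr (1 - (p - 1))"
        by (rule holder_w(2)[OF _ _ _ nn i1 i2 th]) auto
      have iI: "integrable M (\<lambda>x. \<bar>TF x\<bar> powr p)"
        by (rule Bochner_Integration.integrable_bound[OF ih]) (use ae2 in \<open>auto elim!: eventually_mono\<close>)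
      have "I \<le> (\<integral>x. 1 * ((\<bar>Tg x\<bar> powr 2) powr (p - 1) * (TG x) powr (1 - (p - 1))) \<partial>M)"
        unfolding I_def by (rule integral_mono_AE[OF iI ih ae2])
      also have "\<dots> \<le> J powr (p - 1) * (\<integral>y. TG y \<partial>M) powr (2 - p)"
        using hle unfolding J_def by simp
      also have "\<dots> \<le> J powr (p - 1) * L powr (2 - p)"
        using TGL p2' unfolding L_def
        by (intro mult_left_mono powr_mono2) (auto simp: TG0)
      finally show ?thesis by (rule num_b[OF I0 p1 p2'])
    qed
  qed
  show ?thesis unfolding norms using case1 case2 by simp
qed

end



lemma sigma_finite_lebesgue: "sigma_finite_measure (lebesgue :: 'a::euclidean_space measure)"
proof
  show "\<exists>A. countable A \<and> A \<subseteq> sets (lebesgue::'a measure) \<and> \<Union> A = space lebesgue \<and> (\<forall>a\<in>A. emeasure lebesgue a \<noteq> \<infinity>)"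
  proof (intro exI conjI)
    let ?A = "range (\<lambda>n::nat. cbox (- (real n *\<^sub>R One)) (real n *\<^sub>R One) :: 'a set)"
    show "countable ?A" by simp
    show "?A \<subseteq> sets lebesgue" by auto
    show "\<Union> ?A = space lebesgue"
    proof -
      have "\<Union> ?A = UNIV"
      proof (safe)
        fix x :: 'a
        obtain n :: nat where "norm x \<le> real n" using real_arch_simple by blast
        have "x \<in> cbox (- (real n *\<^sub>R One)) (real n *\<^sub>R One)"
          unfolding mem_box
        proof safe
          fix i :: 'a assume i: "i \<in> Basis"
          have "\<bar>x \<bullet> i\<bar> \<le> real n" using Basis_le_norm[OF i, of x] \<open>norm x \<le> real n\<close> by linarith
          then show "- (real n *\<^sub>R One) \<bullet> i \<le> x \<bullet> i" "x \<bullet> i \<le> real n *\<^sub>R One \<bullet> i"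
            using i by auto
        qed
        then show "x \<in> \<Union> ?A" by blast
      qed auto
      then show ?thesis by simp
    qed
    show "\<forall>a\<in>?A. emeasure lebesgue a \<noteq> \<infinity>" by auto
  qed
qed

lemma sigma_finite_lebesgue_on: "S \<in> sets lebesgue \<Longrightarrow> sigma_finite_measure (lebesgue_on S)"
  by (rule sigma_finite_measure_restrict_space[OF sigma_finite_lebesgue]) auto

lemma id_leb_on[measurable]: "(\<lambda>x. x) \<in> lebesgue_on S \<rightarrow>\<^sub>M (borel :: 'a::euclidean_space measure)"
  by (rule measurable_restrict_space1) (simp add: measurable_completion)

lemma borel_leb_on: "(F :: 'a::euclidean_space \<Rightarrow> 'b::topological_space) \<in> borel_measurable borel \<Longrightarrow> F \<in> borel_measurable (lebesgue_on S)"
  using measurable_compose[OF id_leb_on] by blast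

lemma fst_leb_on[measurable]: "(\<lambda>z. fst z) \<in> (lebesgue_on S \<Otimes>\<^sub>M lebesgue_on T) \<rightarrow>\<^sub>M (borel :: 'a::euclidean_space measure)"
  using measurable_compose[OF measurable_fst id_leb_on] by simp

lemma snd_leb_on[measurable]: "(\<lambda>z. snd z) \<in> (lebesgue_on S \<Otimes>\<^sub>M lebesgue_on T) \<rightarrow>\<^sub>M (borel :: 'a::euclidean_space measure)"
  using measurable_compose[OF measurable_snd id_leb_on] by simp

lemma meas_test:
  fixes K' F :: "'a::euclidean_space \<Rightarrow> real"
  assumes [measurable]: "K' \<in> borel_measurable borel" "F \<in> borel_measurable borel"
  shows "(\<lambda>(x,y). K' (x - y)) \<in> borel_measurable (lebesgue_on S \<Otimes>\<^sub>M lebesgue_on S)"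
proof -
  have "(\<lambda>z. K' (fst z - snd z)) \<in> borel_measurable (lebesgue_on S \<Otimes>\<^sub>M lebesgue_on S)"
    by measurable
  then show ?thesis by (simp add: case_prod_beta')
qed

lemma meas_AE_leb_on:
  fixes g h :: "'a::euclidean_space \<Rightarrow> real"
  assumes S: "S \<in> sets lebesgue" and g: "g \<in> borel_measurable (lebesgue_on S)"
    and ae: "AE y in lebesgue_on S. g y = h y"
  shows "h \<in> borel_measurable (lebesgue_on S)"
proof -
  have "(\<lambda>x. if x \<in> S then g x else 0) \<in> borel_measurable lebesgue" by (rule borel_measurable_if[OF S, THEN iffD2, OF g])
  moreover have "AE x in lebesgue. (if x \<in> S then g x else 0) = (if x \<in> S then h x else 0)"
    using ae S by (subst (asm) AE_restrict_space_iff) (auto elim!: eventually_mono)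
  ultimately have "(\<lambda>x. if x \<in> S then h x else 0) \<in> borel_measurable lebesgue" by (rule borel_measurable_AE)
  then show ?thesis by (rule borel_measurable_if[OF S, THEN iffD1])
qed

lemma bridge:
  fixes K f K' :: "'a::euclidean_space \<Rightarrow> real" and p :: real and S :: "'a set"
  assumes S: "S \<in> sets lebesgue"
    and K'meas[measurable]: "K' \<in> borel_measurable borel" and K'nn: "\<And>z. 0 \<le> K' z"
    and b1: "\<And>x. x \<in> S \<Longrightarrow> AE y in lebesgue_on S. K (x - y) = K' (x - y)"
    and b2: "\<And>x. x \<in> S \<Longrightarrow> (\<integral>\<^sup>+y. K' (x - y) \<partial>lebesgue_on S) \<le> 1"
    and b3: "\<And>y. y \<in> S \<Longrightarrow> (\<integral>\<^sup>+x. K' (x - y) \<partial>lebesgue_on S) \<le> 1"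
    and p1: "1 < p"
    and f_Lp: "memLp (lebesgue_on S) p f"
  shows "(2 \<le> p \<longrightarrow>
            Lp_norm (lebesgue_on S) p (conv (lebesgue_on S) K f)
              \<le> Lp_norm (lebesgue_on S) 2 (conv (lebesgue_on S) K (\<lambda>y. \<bar>f y\<bar> powr (p / 2))) powr (2 / p))
       \<and> (p \<le> 2 \<longrightarrow>
            Lp_norm (lebesgue_on S) p (conv (lebesgue_on S) K f)
              \<le> Lp_norm (lebesgue_on S) 2 (conv (lebesgue_on S) K (\<lambda>y. \<bar>f y\<bar> powr (p / 2))) powr (2 * (p - 1) / p)
                 * Lp_norm (lebesgue_on S) p f powr (2 - p))"
proof -
  let ?M = "lebesgue_on S"
  have fm: "f \<in> borel_measurable ?M" and fi: "integrable ?M (\<lambda>x. \<bar>f x\<bar> powr p)"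
    using f_Lp unfolding memLp_def by auto
  have "(\<lambda>x. if x \<in> S then f x else 0) \<in> borel_measurable lebesgue" by (rule borel_measurable_if[OF S, THEN iffD2, OF fm])
  then obtain F where Fb: "F \<in> borel_measurable lborel" and aeF0: "AE x in lborel. (if x \<in> S then f x else 0) = F x"
    using completion_ex_borel_measurable_real by blast
  have Fb'[measurable]: "F \<in> borel_measurable borel" using Fb by simp
  have aeF: "AE x in ?M. f x = F x"
    using AE_completion[OF aeF0] S by (subst AE_restrict_space_iff) (auto elim!: eventually_mono)
  have FM[measurable]: "F \<in> borel_measurable ?M" by (rule borel_leb_on[OF Fb'])
  have Fi: "integrable ?M (\<lambda>x. \<bar>F x\<bar> powr p)"
    using fi by (rule integrable_cong_AE_imp) (use aeF in \<open>auto elim!: eventually_mono\<close>)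
  define k where "k = (\<lambda>x y. K' (x - y))"
  have kmeas: "(\<lambda>(x,y). k x y) \<in> borel_measurable (?M \<Otimes>\<^sub>M ?M)" unfolding k_def by (rule meas_test) measurable
  have core: "(2 \<le> p \<longrightarrow>
      Lp_norm ?M p (kop ?M k F) \<le> Lp_norm ?M 2 (kop ?M k (\<lambda>y. \<bar>F y\<bar> powr (p / 2))) powr (2 / p))
   \<and> (p \<le> 2 \<longrightarrow>
      Lp_norm ?M p (kop ?M k F) \<le> Lp_norm ?M 2 (kop ?M k (\<lambda>y. \<bar>F y\<bar> powr (p / 2))) powr (2 * (p - 1) / p)
         * Lp_norm ?M p F powr (2 - p))"
    by (rule core_main[OF sigma_finite_lebesgue_on[OF S] kmeas _ FM Fi _ _ p1])
       (auto simp: k_def K'nn b2 b3)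
  have conv_eq: "conv ?M K \<psi> x = kop ?M k \<phi> x"
    if x: "x \<in> S" and \<phi>m: "\<phi> \<in> borel_measurable borel" and ae: "AE y in ?M. \<psi> y = \<phi> y" for \<psi> \<phi> x
  proof -
    have [measurable]: "\<phi> \<in> borel_measurable borel" by (rule \<phi>m)
    have ae2: "AE y in ?M. K' (x - y) * \<phi> y = K (x - y) * \<psi> y"
      using ae b1[OF x] by eventually_elim simp
    have m1: "(\<lambda>y. K' (x - y) * \<phi> y) \<in> borel_measurable ?M"
      by (rule borel_leb_on) measurable
    have m2: "(\<lambda>y. K (x - y) * \<psi> y) \<in> borel_measurable ?M"
      by (rule meas_AE_leb_on[OF S m1 ae2])
    show ?thesis unfolding conv_def kop_def k_def
      by (rule integral_cong_AE[OF m2 m1]) (use ae2 in \<open>auto elim!: eventually_mono\<close>)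
  qed
  have e1: "Lp_norm ?M p (conv ?M K f) = Lp_norm ?M p (kop ?M k F)"
    unfolding Lp_norm_def by (intro arg_cong2[where f="(powr)"] Bochner_Integration.integral_cong refl)
      (simp add: conv_eq[OF _ Fb' aeF])
  have aeg: "AE y in ?M. \<bar>f y\<bar> powr (p / 2) = \<bar>F y\<bar> powr (p / 2)" using aeF by eventually_elim simp
  have e2: "Lp_norm ?M 2 (conv ?M K (\<lambda>y. \<bar>f y\<bar> powr (p / 2))) = Lp_norm ?M 2 (kop ?M k (\<lambda>y. \<bar>F y\<bar> powr (p / 2)))"
    unfolding Lp_norm_def by (intro arg_cong2[where f="(powr)"] Bochner_Integration.integral_cong refl)
      (simp add: conv_eq[OF _ _ aeg])
  have e3: "Lp_norm ?M p f = Lp_norm ?M p F"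
    unfolding Lp_norm_def
    by (intro arg_cong2[where f="(powr)"] integral_cong_AE refl) (use fm aeF in \<open>auto elim!: eventually_mono\<close>)
  show ?thesis using core unfolding e1 e2 e3 .
qed




lemma lborel_distr_refl: "distr lborel borel (\<lambda>y. x - y) = (lborel :: 'a::euclidean_space measure)"
  using lborel_affine[of "-1::real" x] by (simp add: density_1)

lemma nn_integral_refl:
  fixes h :: "'a::euclidean_space \<Rightarrow> ennreal"
  assumes [measurable]: "h \<in> borel_measurable borel"
  shows "(\<integral>\<^sup>+y. h (x - y) \<partial>lborel) = (\<integral>\<^sup>+z. h z \<partial>lborel)"
proof -
  have "(\<integral>\<^sup>+z. h z \<partial>lborel) = (\<integral>\<^sup>+z. h z \<partial>distr lborel borel (\<lambda>y. x - y))"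
    by (simp add: lborel_distr_refl)
  also have "\<dots> = (\<integral>\<^sup>+y. h (x - y) \<partial>lborel)" by (rule nn_integral_distr) auto
  finally show ?thesis ..
qed

lemma nn_integral_transl:
  fixes h :: "'a::euclidean_space \<Rightarrow> ennreal"
  assumes [measurable]: "h \<in> borel_measurable borel"
  shows "(\<integral>\<^sup>+x. h (x + c) \<partial>lborel) = (\<integral>\<^sup>+z. h z \<partial>lborel)"
proof -
  have "(\<integral>\<^sup>+z. h z \<partial>lborel) = (\<integral>\<^sup>+z. h z \<partial>distr lborel borel ((+) c))"
    by (simp add: lborel_distr_plus)
  also have "\<dots> = (\<integral>\<^sup>+x. h (c + x) \<partial>lborel)" by (rule nn_integral_distr) auto
  finally show ?thesis by (simp add: add.commute)
qed

lemma AE_refl_null: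
  assumes N: "N \<in> null_sets (lborel :: 'a::euclidean_space measure)"
  shows "AE y in lborel. x - y \<notin> N"
proof -
  have [measurable]: "N \<in> sets borel" using N by (simp add: null_sets_def)
  have "emeasure lborel ((\<lambda>y. x - y) -` N \<inter> space lborel) = emeasure (distr lborel borel (\<lambda>y. x - y)) N"
    by (subst emeasure_distr) auto
  also have "\<dots> = 0" using N by (simp add: lborel_distr_refl null_setsD1)
  moreover have "(\<lambda>y. x - y) -` N \<in> sets borel"
  proof -
    have "(\<lambda>y. x - y) \<in> borel \<rightarrow>\<^sub>M (borel :: 'a measure)" by measurable
    from measurable_sets[OF this \<open>N \<in> sets borel\<close>] show ?thesis by simp
  qed
  ultimately have "(\<lambda>y. x - y) -` N \<in> null_sets lborel" by (auto simp: null_sets_def)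
  then show ?thesis by (rule AE_not_in[THEN eventually_mono]) simp
qed

lemma case_R:
  fixes K f :: "'a::euclidean_space \<Rightarrow> real" and p :: real
  assumes K_nonneg: "\<forall>x. 0 \<le> K x"
    and K_int: "integrable lebesgue K"
    and K_mass: "(\<integral>x. K x \<partial>lebesgue) = 1"
    and p1: "1 < p"
    and f_Lp: "memLp lebesgue p f"
  shows "(2 \<le> p \<longrightarrow>
            Lp_norm lebesgue p (conv lebesgue K f)
              \<le> Lp_norm lebesgue 2 (conv lebesgue K (\<lambda>y. \<bar>f y\<bar> powr (p / 2))) powr (2 / p))
       \<and> (p \<le> 2 \<longrightarrow>
            Lp_norm lebesgue p (conv lebesgue K f)
              \<le> Lp_norm lebesgue 2 (conv lebesgue K (\<lambda>y. \<bar>f y\<bar> powr (p / 2))) powr (2 * (p - 1) / p)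
                 * Lp_norm lebesgue p f powr (2 - p))"
proof -
  have "K \<in> borel_measurable (completion lborel)" using K_int by auto
  then obtain K0 where K0b: "K0 \<in> borel_measurable lborel" and aeK0: "AE x in lborel. K x = K0 x"
    using completion_ex_borel_measurable_real by blast
  define K' where "K' = (\<lambda>z. max 0 (K0 z))"
  have K'b[measurable]: "K' \<in> borel_measurable borel" unfolding K'_def using K0b by simp
  have K'nn: "\<And>z. 0 \<le> K' z" unfolding K'_def by simp
  have aeK': "AE z in lborel. K z = K' z"
    using aeK0
  proof (rule eventually_mono)
    fix z assume "K z = K0 z"
    then show "K z = K' z" unfolding K'_def using K_nonneg[rule_format, of z] by simp
  qed
  then obtain N where N: "N \<in> null_sets lborel" "{z \<in> space lborel. \<not> K z = K' z} \<subseteq> N"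
    unfolding eventually_ae_filter by auto
  have mass: "(\<integral>\<^sup>+z. ennreal (K' z) \<partial>lborel) = 1"
  proof -
    have "(\<integral>\<^sup>+z. ennreal (K' z) \<partial>lborel) = (\<integral>\<^sup>+z. ennreal (K' z) \<partial>lebesgue)"
      by (simp add: nn_integral_completion)
    also have "\<dots> = (\<integral>\<^sup>+z. ennreal (K z) \<partial>lebesgue)"
      by (rule nn_integral_cong_AE) (use AE_completion[OF aeK'] in \<open>auto elim!: eventually_mono\<close>)
    also have "\<dots> = ennreal (\<integral>z. K z \<partial>lebesgue)"
      by (rule nn_integral_eq_integral[OF K_int]) (simp add: K_nonneg)
    finally show ?thesis using K_mass by simp
  qed
  have b1: "AE y in lebesgue_on UNIV. K (x - y) = K' (x - y)" for x
  proof -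
    have "AE y in lborel. K (x - y) = K' (x - y)"
      using AE_refl_null[OF N(1), of x] N(2) by (auto elim!: eventually_mono)
    then show ?thesis unfolding lebesgue_on_UNIV_eq by (rule AE_completion)
  qed
  have b2: "(\<integral>\<^sup>+y. K' (x - y) \<partial>lebesgue_on UNIV) \<le> 1" for x
    using mass by (simp add: lebesgue_on_UNIV_eq nn_integral_completion nn_integral_refl[of "\<lambda>z. ennreal (K' z)"])
  have b3: "(\<integral>\<^sup>+x. K' (x - y) \<partial>lebesgue_on UNIV) \<le> 1" for y
    using mass nn_integral_transl[of "\<lambda>z. ennreal (K' z)" "- y"]
    by (simp add: lebesgue_on_UNIV_eq nn_integral_completion)
  have f_Lp': "memLp (lebesgue_on UNIV) p f" using f_Lp by (simp add: lebesgue_on_UNIV_eq)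
  show ?thesis
    using bridge[OF _ K'b K'nn b1 b2 b3 p1 f_Lp'] by (simp add: lebesgue_on_UNIV_eq)
qed




lemma AE_hyperplane:
  assumes b: "b \<in> (Basis :: 'a::euclidean_space set)"
  shows "AE z in lborel. z \<bullet> b \<noteq> v"
proof -
  have "negligible {z::'a. b \<bullet> z = v}" using b by (intro negligible_hyperplane) auto
  then have "{z::'a. b \<bullet> z = v} \<in> null_sets lebesgue" by (simp add: negligible_iff_null_sets)
  moreover have "{z::'a. b \<bullet> z = v} \<in> sets borel" by measurable
  ultimately have "{z::'a. b \<bullet> z = v} \<in> null_sets lborel" by (simp add: null_sets_completion_iff)
  then show ?thesis by (rule AE_not_in[THEN eventually_mono]) (simp add: inner_commute)
qed

lemma mem_box_shift:
  fixes c z :: "'a::euclidean_space"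
  assumes b: "b \<in> Basis"
  shows "z \<in> cbox (c + u *\<^sub>R b) (c + u *\<^sub>R b + One) \<longleftrightarrow>
    (\<forall>i\<in>Basis. i \<noteq> b \<longrightarrow> c \<bullet> i \<le> z \<bullet> i \<and> z \<bullet> i \<le> c \<bullet> i + 1) \<and> c \<bullet> b + u \<le> z \<bullet> b \<and> z \<bullet> b \<le> c \<bullet> b + u + 1"
  using b unfolding mem_box by (auto simp: inner_add_left inner_Basis algebra_simps)

lemma test_meas:
  fixes c :: "'a::euclidean_space"
  shows "Measurable.pred borel (\<lambda>z::'a. (\<forall>i\<in>Basis. i \<noteq> b \<longrightarrow> c \<bullet> i \<le> z \<bullet> i \<and> z \<bullet> i \<le> c \<bullet> i + 1) \<and> v \<le> z \<bullet> b \<and> z \<bullet> b < w)"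
  by measurable

definition boxint :: "('a::euclidean_space \<Rightarrow> ennreal) \<Rightarrow> 'a \<Rightarrow> ennreal" where
  "boxint H a = (\<integral>\<^sup>+z. H z * indicator (cbox a (a + One)) z \<partial>lborel)"

context
  fixes H :: "'a::euclidean_space \<Rightarrow> ennreal"
  assumes Hm: "H \<in> borel_measurable borel"
    and Hp: "\<And>z b. b \<in> Basis \<Longrightarrow> H (z + b) = H z"
begin

lemma boxint_shift1:
  assumes b: "b \<in> Basis"
  shows "boxint H (a + b) = boxint H a"
proof -
  note Hm[measurable]
  have "boxint H (a + b) = (\<integral>\<^sup>+x. H (x + b) * indicator (cbox (a + b) (a + b + One)) (x + b) \<partial>lborel)"
    unfolding boxint_def by (rule nn_integral_transl[symmetric]) measurable
  also have "\<dots> = boxint H a" unfolding boxint_def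
    by (intro nn_integral_cong) (simp add: Hp[OF b] indicator_def mem_box inner_add_left)
  finally show ?thesis .
qed

lemma boxint_shift_nat:
  assumes b: "b \<in> Basis"
  shows "boxint H (a + real n *\<^sub>R b) = boxint H a"
proof (induction n)
  case 0 then show ?case by simp
next
  case (Suc n)
  have eq: "a + real (Suc n) *\<^sub>R b = (a + real n *\<^sub>R b) + b"
    by (simp add: scaleR_add_left add.assoc)
  show ?case unfolding eq by (simp only: boxint_shift1[OF b] Suc.IH)
qed

lemma boxint_shift_int:
  assumes b: "b \<in> Basis"
  shows "boxint H (a + of_int n *\<^sub>R b) = boxint H a"
proof (cases "0 \<le> n")
  case True
  define m where "m = nat n"
  have "n = int m" using True unfolding m_def by simp
  then show ?thesis using boxint_shift_nat[OF b, of a m] by simp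
next
  case False
  define m where "m = nat (- n)"
  have m: "n = - int m" using False unfolding m_def by simp
  have "boxint H ((a - real m *\<^sub>R b) + real m *\<^sub>R b) = boxint H (a - real m *\<^sub>R b)"
    by (rule boxint_shift_nat[OF b])
  then show ?thesis using m by (simp add: algebra_simps)
qed

lemma boxint_slide:
  assumes b: "b \<in> Basis" and u: "0 \<le> u" "u \<le> 1"
  shows "boxint H (c + u *\<^sub>R b) = boxint H c"
proof -
  note Hm[measurable]
  define P where "P z \<longleftrightarrow> (\<forall>i\<in>Basis. i \<noteq> b \<longrightarrow> c \<bullet> i \<le> z \<bullet> i \<and> z \<bullet> i \<le> c \<bullet> i + 1)" for z :: 'a
  define \<beta> where "\<beta> = c \<bullet> b"
  have Pm[measurable]: "Measurable.pred borel P" unfolding P_def by measurable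
  have Pb: "P (x + b) = P x" for x unfolding P_def using b by (auto simp: inner_add_left inner_Basis)
  define I1 where "I1 = (\<integral>\<^sup>+z. H z * indicator {z. P z \<and> \<beta> + u \<le> z \<bullet> b \<and> z \<bullet> b < \<beta> + 1} z \<partial>lborel)"
  define I2 where "I2 = (\<integral>\<^sup>+z. H z * indicator {z. P z \<and> \<beta> \<le> z \<bullet> b \<and> z \<bullet> b \<le> \<beta> + u} z \<partial>lborel)"
  have box: "z \<in> cbox (c + v *\<^sub>R b) (c + v *\<^sub>R b + One) \<longleftrightarrow> P z \<and> \<beta> + v \<le> z \<bullet> b \<and> z \<bullet> b \<le> \<beta> + v + 1" for z v
    unfolding P_def \<beta>_def by (rule mem_box_shift[OF b])
  have "boxint H (c + u *\<^sub>R b) = (\<integral>\<^sup>+z. H z * indicator {z. P z \<and> \<beta> + u \<le> z \<bullet> b \<and> z \<bullet> b < \<beta> + 1} z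
        + H z * indicator {z. P z \<and> \<beta> + 1 \<le> z \<bullet> b \<and> z \<bullet> b \<le> \<beta> + u + 1} z \<partial>lborel)"
    unfolding boxint_def using u by (intro nn_integral_cong) (auto simp: box indicator_def)
  also have "\<dots> = I1 + (\<integral>\<^sup>+z. H z * indicator {z. P z \<and> \<beta> + 1 \<le> z \<bullet> b \<and> z \<bullet> b \<le> \<beta> + u + 1} z \<partial>lborel)"
    unfolding I1_def by (rule nn_integral_add) auto
  also have "(\<integral>\<^sup>+z. H z * indicator {z. P z \<and> \<beta> + 1 \<le> z \<bullet> b \<and> z \<bullet> b \<le> \<beta> + u + 1} z \<partial>lborel)
      = (\<integral>\<^sup>+x. H (x + b) * indicator {z. P z \<and> \<beta> + 1 \<le> z \<bullet> b \<and> z \<bullet> b \<le> \<beta> + u + 1} (x + b) \<partial>lborel)"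
    by (rule nn_integral_transl[symmetric]) measurable
  also have "\<dots> = I2" unfolding I2_def
    by (intro nn_integral_cong) (use b in \<open>auto simp: Hp Pb indicator_def inner_add_left\<close>)
  also have "I1 + I2 = (\<integral>\<^sup>+z. H z * indicator {z. P z \<and> \<beta> + u \<le> z \<bullet> b \<and> z \<bullet> b < \<beta> + 1} z
        + H z * indicator {z. P z \<and> \<beta> \<le> z \<bullet> b \<and> z \<bullet> b \<le> \<beta> + u} z \<partial>lborel)"
    unfolding I1_def I2_def by (rule nn_integral_add[symmetric]) auto
  also have "\<dots> = boxint H c"
  proof -
    have "boxint H c = boxint H (c + 0 *\<^sub>R b)" by simp
    also have "\<dots> = (\<integral>\<^sup>+z. H z * indicator {z. P z \<and> \<beta> + u \<le> z \<bullet> b \<and> z \<bullet> b < \<beta> + 1} z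
        + H z * indicator {z. P z \<and> \<beta> \<le> z \<bullet> b \<and> z \<bullet> b \<le> \<beta> + u} z \<partial>lborel)"
      unfolding boxint_def
    proof (rule nn_integral_cong_AE)
      show "AE z in lborel. H z * indicator (cbox (c + 0 *\<^sub>R b) (c + 0 *\<^sub>R b + One)) z =
          H z * indicator {z. P z \<and> \<beta> + u \<le> z \<bullet> b \<and> z \<bullet> b < \<beta> + 1} z
        + H z * indicator {z. P z \<and> \<beta> \<le> z \<bullet> b \<and> z \<bullet> b \<le> \<beta> + u} z"
        using AE_hyperplane[OF b, of "\<beta> + u"] AE_hyperplane[OF b, of "\<beta> + 1"]
      proof eventually_elim
        case (elim z)
        have box0: "z \<in> cbox c (c + One) \<longleftrightarrow> P z \<and> \<beta> \<le> z \<bullet> b \<and> z \<bullet> b \<le> \<beta> + 1"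
          using box[of z 0] by simp
        have e1: "(\<beta> \<le> z \<bullet> b \<and> z \<bullet> b \<le> \<beta> + 1) \<longleftrightarrow> (\<beta> + u \<le> z \<bullet> b \<and> z \<bullet> b < \<beta> + 1) \<or> (\<beta> \<le> z \<bullet> b \<and> z \<bullet> b \<le> \<beta> + u)"
          using u elim by linarith
        have e2: "\<not> ((\<beta> + u \<le> z \<bullet> b \<and> z \<bullet> b < \<beta> + 1) \<and> (\<beta> \<le> z \<bullet> b \<and> z \<bullet> b \<le> \<beta> + u))"
          using u elim by linarith
        have mA: "z \<in> cbox (c + 0 *\<^sub>R b) (c + 0 *\<^sub>R b + One) \<longleftrightarrow> P z \<and> \<beta> \<le> z \<bullet> b \<and> z \<bullet> b \<le> \<beta> + 1"
          using box[of z 0] by simp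
        let ?B1 = "{z. P z \<and> \<beta> + u \<le> z \<bullet> b \<and> z \<bullet> b < \<beta> + 1}"
        let ?B2 = "{z. P z \<and> \<beta> \<le> z \<bullet> b \<and> z \<bullet> b \<le> \<beta> + u}"
        let ?A = "cbox (c + 0 *\<^sub>R b) (c + 0 *\<^sub>R b + One)"
        consider (c1) "z \<in> ?A" "z \<in> ?B1" "z \<notin> ?B2" | (c2) "z \<in> ?A" "z \<notin> ?B1" "z \<in> ?B2"
          | (c3) "z \<notin> ?A" "z \<notin> ?B1" "z \<notin> ?B2"
          using e1 e2 unfolding mA by blast
        then show ?case
        proof cases
          case c1 then show ?thesis by (simp add: indicator_def)
        next
          case c2 then show ?thesis by (simp add: indicator_def)
        next
          case c3 then show ?thesis by (simp add: indicator_def)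
        qed
      qed
    qed
    finally show ?thesis by simp
  qed
  finally show ?thesis .
qed

lemma boxint_slide_any:
  assumes b: "b \<in> Basis"
  shows "boxint H (c + s *\<^sub>R b) = boxint H c"
proof -
  have eq: "c + s *\<^sub>R b = (c + frac s *\<^sub>R b) + of_int \<lfloor>s\<rfloor> *\<^sub>R b"
  proof -
    have "s = frac s + of_int \<lfloor>s\<rfloor>" by (simp add: frac_def)
    then have "s *\<^sub>R b = frac s *\<^sub>R b + of_int \<lfloor>s\<rfloor> *\<^sub>R b" by (metis scaleR_add_left)
    then show ?thesis by (simp add: add.assoc)
  qed
  have "boxint H (c + s *\<^sub>R b) = boxint H (c + frac s *\<^sub>R b)"
    unfolding eq by (simp only: boxint_shift_int[OF b])
  also have "\<dots> = boxint H c"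
    by (rule boxint_slide[OF b frac_ge_0 less_imp_le[OF frac_lt_1]])
  finally show ?thesis .
qed

lemma boxint_const: "boxint H a = boxint H 0"
proof -
  have "S \<subseteq> Basis \<Longrightarrow> boxint H (\<Sum>i\<in>S. (a \<bullet> i) *\<^sub>R i) = boxint H 0" for S
  proof (induction S rule: infinite_finite_induct)
    case (infinite S)
    then show ?case using finite_subset[OF _ finite_Basis] by blast
  next
    case empty then show ?case by simp
  next
    case (insert i S)
    then have "boxint H (\<Sum>i\<in>insert i S. (a \<bullet> i) *\<^sub>R i) = boxint H ((\<Sum>i\<in>S. (a \<bullet> i) *\<^sub>R i) + (a \<bullet> i) *\<^sub>R i)"
      by (simp add: add.commute)
    also have "\<dots> = boxint H (\<Sum>i\<in>S. (a \<bullet> i) *\<^sub>R i)"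
      using insert by (intro boxint_slide_any) auto
    finally show ?case using insert by simp
  qed
  from this[of Basis] show ?thesis by (simp add: euclidean_representation)
qed

end




definition per :: "'a::euclidean_space \<Rightarrow> 'a" where
  "per z = (\<Sum>b\<in>Basis. frac (z \<bullet> b) *\<^sub>R b)"

lemma per_inner: "b \<in> Basis \<Longrightarrow> per z \<bullet> b = frac (z \<bullet> b)"
  unfolding per_def by (simp add: inner_sum_left inner_Basis if_distrib sum.delta cong: if_cong)

lemma per_in: "per z \<in> cbox 0 One"
  unfolding mem_box by (simp add: per_inner frac_ge_0 less_imp_le[OF frac_lt_1])

lemma per_id: "(\<And>b. b \<in> Basis \<Longrightarrow> 0 \<le> z \<bullet> b \<and> z \<bullet> b < 1) \<Longrightarrow> per z = z"
  by (rule euclidean_eqI) (simp add: per_inner frac_eq)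

lemma per_shift: "b \<in> Basis \<Longrightarrow> per (z + b) = per z"
proof (rule euclidean_eqI)
  fix i :: 'a assume b: "b \<in> Basis" and i: "i \<in> Basis"
  show "per (z + b) \<bullet> i = per z \<bullet> i"
  proof (cases "i = b")
    case True
    have "frac (z \<bullet> b + 1) = frac (z \<bullet> b)" by (simp add: frac_def)
    then show ?thesis using True b by (simp add: per_inner inner_add_left)
  next
    case False
    then show ?thesis using b i by (simp add: per_inner inner_add_left inner_Basis)
  qed
qed

lemma per_meas[measurable]: "per \<in> borel_measurable (borel :: 'a::euclidean_space measure)"
proof -
  have fl: "(\<lambda>z::'a. real_of_int \<lfloor>z \<bullet> b\<rfloor>) \<in> borel_measurable borel" for b :: 'a
    using measurable_compose[OF _ borel_measurable_real_floor, of "\<lambda>z::'a. z \<bullet> b" borel] by simp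
  have "(\<lambda>z::'a. \<Sum>b\<in>Basis. (z \<bullet> b - real_of_int \<lfloor>z \<bullet> b\<rfloor>) *\<^sub>R b) \<in> borel_measurable borel"
    by (intro borel_measurable_sum borel_measurable_scaleR borel_measurable_diff fl) auto
  then show ?thesis unfolding per_def frac_def by (simp add: fun_eq_iff)
qed

lemma per_decomp: "z = per z + (\<Sum>i\<in>Basis. of_int \<lfloor>z \<bullet> i\<rfloor> *\<^sub>R i)"
proof (rule euclidean_eqI)
  fix b :: 'a assume b: "b \<in> Basis"
  have "(\<Sum>i\<in>Basis. of_int \<lfloor>z \<bullet> i\<rfloor> *\<^sub>R i) \<bullet> b = of_int \<lfloor>z \<bullet> b\<rfloor>"
    using b by (simp add: inner_sum_left inner_Basis if_distrib sum.delta cong: if_cong)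
  then show "z \<bullet> b = (per z + (\<Sum>i\<in>Basis. of_int \<lfloor>z \<bullet> i\<rfloor> *\<^sub>R i)) \<bullet> b"
    using b by (simp add: inner_add_left per_inner frac_def)
qed

lemma periodic_int:
  assumes P: "Zd_periodic K" and b: "b \<in> Basis"
  shows "K (x + of_int n *\<^sub>R b) = K x"
proof -
  have nat: "K (y + real m *\<^sub>R b) = K y" for y m
  proof (induction m)
    case 0 then show ?case by simp
  next
    case (Suc m)
    have eq: "y + real (Suc m) *\<^sub>R b = (y + real m *\<^sub>R b) + b"
      by (simp add: scaleR_add_left add.assoc)
    show ?case unfolding eq using P b Suc.IH unfolding Zd_periodic_def by simp
  qed
  show ?thesis
  proof (cases "0 \<le> n")
    case True
    define m where "m = nat n"
    have "n = int m" using True unfolding m_def by simp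
    then show ?thesis using nat[of x m] by simp
  next
    case False
    define m where "m = nat (- n)"
    have m: "n = - int m" using False unfolding m_def by simp
    have "K ((x - real m *\<^sub>R b) + real m *\<^sub>R b) = K (x - real m *\<^sub>R b)" by (rule nat)
    then show ?thesis using m by (simp add: algebra_simps)
  qed
qed

lemma periodic_sum:
  assumes P: "Zd_periodic K"
  shows "S \<subseteq> Basis \<Longrightarrow> K (x + (\<Sum>i\<in>S. of_int (m i) *\<^sub>R i)) = K x"
proof (induction S arbitrary: x rule: infinite_finite_induct)
  case (infinite S)
  then show ?case using finite_subset[OF _ finite_Basis] by blast
next
  case empty then show ?case by simp
next
  case (insert i S)
  have "K (x + (\<Sum>i\<in>insert i S. of_int (m i) *\<^sub>R i)) = K ((x + (\<Sum>i\<in>S. of_int (m i) *\<^sub>R i)) + of_int (m i) *\<^sub>R i)"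
    using insert by (simp add: algebra_simps)
  also have "\<dots> = K (x + (\<Sum>i\<in>S. of_int (m i) *\<^sub>R i))"
    using insert by (intro periodic_int[OF P]) auto
  also have "\<dots> = K x" using insert by simp
  finally show ?case .
qed

lemma periodic_per:
  assumes P: "Zd_periodic K"
  shows "K (per z) = K z"
proof -
  have "K z = K (per z + (\<Sum>i\<in>Basis. of_int \<lfloor>z \<bullet> i\<rfloor> *\<^sub>R i))"
    by (subst per_decomp) simp
  also have "\<dots> = K (per z)" by (rule periodic_sum[OF P]) simp
  finally show ?thesis ..
qed





lemma per_on_cube:
  fixes h :: "'a::euclidean_space \<Rightarrow> ennreal"
  shows "(\<integral>\<^sup>+z. h (per z) * indicator (cbox 0 One) z \<partial>lborel) = (\<integral>\<^sup>+z. h z * indicator (cbox (0::'a) One) z \<partial>lborel)"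
proof (rule nn_integral_cong_AE)
  have "AE z in lborel. \<forall>b\<in>Basis. z \<bullet> b \<noteq> (1::real)"
    by (subst AE_ball_countable) (auto intro: AE_hyperplane countable_finite)
  then show "AE z in lborel. h (per z) * indicator (cbox 0 One) z = h z * indicator (cbox (0::'a) One) z"
  proof eventually_elim
    case (elim z)
    show ?case
    proof (cases "z \<in> cbox 0 One")
      case True
      then have "per z = z" using elim by (intro per_id) (auto simp: mem_box less_le)
      then show ?thesis by simp
    qed simp
  qed
qed

lemma boxint_per:
  fixes h :: "'a::euclidean_space \<Rightarrow> ennreal"
  assumes [measurable]: "h \<in> borel_measurable borel"
  shows "boxint (\<lambda>z. h (per z)) a = (\<integral>\<^sup>+z. h z * indicator (cbox (0::'a) One) z \<partial>lborel)"
proof -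
  have "boxint (\<lambda>z. h (per z)) a = boxint (\<lambda>z. h (per z)) 0"
    by (rule boxint_const) (auto simp: per_shift)
  also have "\<dots> = (\<integral>\<^sup>+z. h z * indicator (cbox (0::'a) One) z \<partial>lborel)"
    unfolding boxint_def using per_on_cube[of h] by simp
  finally show ?thesis .
qed

lemma form1:
  fixes h :: "'a::euclidean_space \<Rightarrow> ennreal"
  assumes [measurable]: "h \<in> borel_measurable borel"
  shows "(\<integral>\<^sup>+y. h (per (x - y)) * indicator (cbox 0 One) y \<partial>lborel) = (\<integral>\<^sup>+z. h z * indicator (cbox (0::'a) One) z \<partial>lborel)"
proof -
  have "(\<integral>\<^sup>+y. h (per (x - y)) * indicator (cbox 0 One) y \<partial>lborel)
      = (\<integral>\<^sup>+y. (\<lambda>z. h (per z) * indicator (cbox 0 One) (x - z)) (x - y) \<partial>lborel)"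
    by simp
  also have "\<dots> = (\<integral>\<^sup>+z. h (per z) * indicator (cbox 0 One) (x - z) \<partial>lborel)"
    by (rule nn_integral_refl) measurable
  also have "\<dots> = boxint (\<lambda>z. h (per z)) (x - One)"
    unfolding boxint_def
    by (intro nn_integral_cong) (auto simp: indicator_def mem_box inner_diff_left algebra_simps)
  also have "\<dots> = (\<integral>\<^sup>+z. h z * indicator (cbox (0::'a) One) z \<partial>lborel)"
    by (rule boxint_per) measurable
  finally show ?thesis .
qed

lemma form2:
  fixes h :: "'a::euclidean_space \<Rightarrow> ennreal"
  assumes [measurable]: "h \<in> borel_measurable borel"
  shows "(\<integral>\<^sup>+x. h (per (x - y)) * indicator (cbox 0 One) x \<partial>lborel) = (\<integral>\<^sup>+z. h z * indicator (cbox (0::'a) One) z \<partial>lborel)"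
proof -
  have "(\<integral>\<^sup>+x. h (per (x - y)) * indicator (cbox 0 One) x \<partial>lborel)
      = (\<integral>\<^sup>+x. (\<lambda>z. h (per z) * indicator (cbox 0 One) (z + y)) (x + - y) \<partial>lborel)"
    by simp
  also have "\<dots> = (\<integral>\<^sup>+z. h (per z) * indicator (cbox 0 One) (z + y) \<partial>lborel)"
    by (rule nn_integral_transl) measurable
  also have "\<dots> = boxint (\<lambda>z. h (per z)) (- y)"
    unfolding boxint_def
    by (intro nn_integral_cong) (auto simp: indicator_def mem_box inner_add_left algebra_simps)
  also have "\<dots> = (\<integral>\<^sup>+z. h z * indicator (cbox (0::'a) One) z \<partial>lborel)"
    by (rule boxint_per) measurable
  finally show ?thesis .
qed




lemma case_T:
  fixes K f :: "'a::euclidean_space \<Rightarrow> real" and p :: real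
  assumes KP: "Zd_periodic K"
    and K_nonneg: "\<forall>x. 0 \<le> K x"
    and K_int: "integrable torus_measure K"
    and K_mass: "(\<integral>x. K x \<partial>torus_measure) = 1"
    and p1: "1 < p"
    and f_Lp: "memLp torus_measure p f"
  shows "(2 \<le> p \<longrightarrow>
            Lp_norm torus_measure p (conv torus_measure K f)
              \<le> Lp_norm torus_measure 2 (conv torus_measure K (\<lambda>y. \<bar>f y\<bar> powr (p / 2))) powr (2 / p))
       \<and> (p \<le> 2 \<longrightarrow>
            Lp_norm torus_measure p (conv torus_measure K f)
              \<le> Lp_norm torus_measure 2 (conv torus_measure K (\<lambda>y. \<bar>f y\<bar> powr (p / 2))) powr (2 * (p - 1) / p)
                 * Lp_norm torus_measure p f powr (2 - p))"
proof -
  let ?Q = "cbox (0::'a) One"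
  have Qs: "?Q \<in> sets lebesgue" by simp
  have Qs': "?Q \<inter> space lebesgue \<in> sets lebesgue" by simp
  have K_int': "integrable (lebesgue_on ?Q) K" using K_int unfolding torus_measure_def .
  have Km: "K \<in> borel_measurable (lebesgue_on ?Q)" using K_int' by auto
  have "(\<lambda>x. if x \<in> ?Q then K x else 0) \<in> borel_measurable lebesgue"
    by (rule borel_measurable_if[OF Qs, THEN iffD2, OF Km])
  then obtain K0 where K0b: "K0 \<in> borel_measurable lborel"
    and aeK0: "AE x in lborel. (if x \<in> ?Q then K x else 0) = K0 x"
    using completion_ex_borel_measurable_real by blast
  have K0b'[measurable]: "K0 \<in> borel_measurable borel" using K0b by simp
  obtain N where N: "N \<in> null_sets lborel" "{x \<in> space lborel. \<not> (if x \<in> ?Q then K x else 0) = K0 x} \<subseteq> N"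
    using aeK0 unfolding eventually_ae_filter by auto
  have Nb[measurable]: "N \<in> sets borel" using N by (simp add: null_sets_def)
  define K' where "K' = (\<lambda>z. max 0 (K0 (per z)))"
  have K'b[measurable]: "K' \<in> borel_measurable borel" unfolding K'_def by measurable
  have K'nn: "\<And>z. 0 \<le> K' z" unfolding K'_def by simp
  have key: "per z \<in> N" if "K z \<noteq> K' z" for z
  proof (rule ccontr)
    assume "per z \<notin> N"
    then have "per z \<notin> {x \<in> space lborel. \<not> (if x \<in> ?Q then K x else 0) = K0 x}" using N(2) by blast
    then have "(if per z \<in> ?Q then K (per z) else 0) = K0 (per z)" by simp
    then have "K0 (per z) = K z" using per_in[of z] periodic_per[OF KP, of z] by simp
    then have "K' z = K z" unfolding K'_def using K_nonneg by simp
    then show False using that by simp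
  qed
  have mass: "(\<integral>\<^sup>+z. ennreal (max 0 (K0 z)) * indicator ?Q z \<partial>lborel) = 1"
  proof -
    have "(\<integral>\<^sup>+z. ennreal (max 0 (K0 z)) * indicator ?Q z \<partial>lborel)
        = (\<integral>\<^sup>+z. ennreal (max 0 (K0 z)) * indicator ?Q z \<partial>lebesgue)"
      by (simp add: nn_integral_completion)
    also have "\<dots> = (\<integral>\<^sup>+z. ennreal (K z) * indicator ?Q z \<partial>lebesgue)"
    proof (rule nn_integral_cong_AE)
      show "AE z in lebesgue. ennreal (max 0 (K0 z)) * indicator ?Q z = ennreal (K z) * indicator ?Q z"
        using AE_completion[OF aeK0]
      proof eventually_elim
        case (elim z)
        show ?case
        proof (cases "z \<in> ?Q")
          case True
          then have "K z = K0 z" using elim by simp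
          moreover have "0 \<le> K z" using K_nonneg by simp
          ultimately have "max 0 (K0 z) = K z" by simp
          then show ?thesis by simp
        qed simp
      qed
    qed
    also have "\<dots> = (\<integral>\<^sup>+z. ennreal (K z) \<partial>lebesgue_on ?Q)"
      by (rule nn_integral_restrict_space[OF Qs', symmetric])
    also have "\<dots> = ennreal (\<integral>z. K z \<partial>lebesgue_on ?Q)"
      by (rule nn_integral_eq_integral[OF K_int']) (simp add: K_nonneg)
    finally show ?thesis using K_mass unfolding torus_measure_def by simp
  qed
  have b1: "AE y in lebesgue_on ?Q. K (x - y) = K' (x - y)" for x
  proof -
    have "(\<integral>\<^sup>+y. indicator N (per (x - y)) * indicator ?Q y \<partial>lborel) = (\<integral>\<^sup>+z. indicator N z * indicator ?Q z \<partial>lborel)"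
      by (rule form1) measurable
    also have "\<dots> \<le> (\<integral>\<^sup>+z. indicator N z \<partial>lborel)"
      by (intro nn_integral_mono) (simp add: indicator_def)
    also have "\<dots> = 0" using N(1) by (simp add: null_setsD1)
    finally have "(\<integral>\<^sup>+y. indicator N (per (x - y)) * indicator ?Q y \<partial>lborel) = 0" by simp
    then have "AE y in lborel. indicator N (per (x - y)) * indicator ?Q y = (0::ennreal)"
      by (subst (asm) nn_integral_0_iff_AE) measurable
    then have "AE y in lborel. y \<in> ?Q \<longrightarrow> K (x - y) = K' (x - y)"
      by eventually_elim (auto simp: indicator_def dest: key)
    then have "AE y in lebesgue. y \<in> ?Q \<longrightarrow> K (x - y) = K' (x - y)" by (rule AE_completion)
    then show ?thesis by (subst AE_restrict_space_iff[OF Qs'])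
  qed
  have b2: "(\<integral>\<^sup>+y. K' (x - y) \<partial>lebesgue_on ?Q) \<le> 1" for x
  proof -
    have "(\<integral>\<^sup>+y. K' (x - y) \<partial>lebesgue_on ?Q) = (\<integral>\<^sup>+y. ennreal (K' (x - y)) * indicator ?Q y \<partial>lborel)"
      by (simp add: nn_integral_restrict_space[OF Qs'] nn_integral_completion)
    also have "\<dots> = (\<integral>\<^sup>+z. ennreal (max 0 (K0 z)) * indicator ?Q z \<partial>lborel)"
      unfolding K'_def by (rule form1) measurable
    finally show ?thesis using mass by simp
  qed
  have b3: "(\<integral>\<^sup>+x. K' (x - y) \<partial>lebesgue_on ?Q) \<le> 1" for y
  proof -
    have "(\<integral>\<^sup>+x. K' (x - y) \<partial>lebesgue_on ?Q) = (\<integral>\<^sup>+x. ennreal (K' (x - y)) * indicator ?Q x \<partial>lborel)"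
      by (simp add: nn_integral_restrict_space[OF Qs'] nn_integral_completion)
    also have "\<dots> = (\<integral>\<^sup>+z. ennreal (max 0 (K0 z)) * indicator ?Q z \<partial>lborel)"
      unfolding K'_def by (rule form2) measurable
    finally show ?thesis using mass by simp
  qed
  have f_Lp': "memLp (lebesgue_on ?Q) p f" using f_Lp unfolding torus_measure_def .
  show ?thesis
    using bridge[OF Qs K'b K'nn b1 b2 b3 p1 f_Lp'] unfolding torus_measure_def .
qed


theorem lemma4p4:
  fixes K f :: "'a::euclidean_space \<Rightarrow> real" and p :: real and M :: "'a measure"
  assumes Omega: "M = lebesgue \<or> (M = torus_measure \<and> Zd_periodic K \<and> Zd_periodic f)"
    and K_nonneg: "\<forall>x. 0 \<le> K x"
    and K_int: "integrable M K"
    and K_mass: "(\<integral>x. K x \<partial>M) = 1"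
    and p_gt1: "1 < p"
    and f_Lp: "memLp M p f"
  shows "(2 \<le> p \<longrightarrow>
            Lp_norm M p (conv M K f)
              \<le> Lp_norm M 2 (conv M K (\<lambda>y. \<bar>f y\<bar> powr (p / 2))) powr (2 / p))
       \<and> (p \<le> 2 \<longrightarrow>
            Lp_norm M p (conv M K f)
              \<le> Lp_norm M 2 (conv M K (\<lambda>y. \<bar>f y\<bar> powr (p / 2))) powr (2 * (p - 1) / p)
                 * Lp_norm M p f powr (2 - p))"
  proof -
  from Omega show ?thesis
  proof
    assume "M = lebesgue"
    then show ?thesis using case_R[OF K_nonneg _ _ p_gt1] K_int K_mass f_Lp by simp
  next
    assume "M = torus_measure \<and> Zd_periodic K \<and> Zd_periodic f"
    then show ?thesis using case_T[OF _ K_nonneg _ _ p_gt1] K_int K_mass f_Lp by simp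
  qed
qed

end
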